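(* Let $0<3x_0<L$, $\gamma=\gamma(x_0,L)$, $\lambda=\lambda(x_0,L)=\frac{2L}{L+x_0}$, and let $\mathcal V$ be an admissible variation of $\gamma$, with $\varphi,\psi$ defined by $X=\varphi N+\varphi_\tau\dot\gamma$, $X'=\psi N+\psi_\tau\dot\gamma$. Then $$\left.\frac{d^2(\mathcal F-\lambda\mathcal A)(\mathcal V(\cdot,t))}{dt^2}\right|_{t=0}=\int_0^{2L}\Big((2-\lambda)H\varphi^2-\frac{2\dot\varphi^2}{H}+\frac{2\ddot\varphi^2}{H^3}\Big)ds+\Big[\frac{\dot\psi}{H^2}\Big]_0^{2L}\ \ge\ \int_0^{2L}\Big((2-\lambda)H\varphi^2-\frac{2\dot\varphi^2}{H}+\frac{2\ddot\varphi^2}{H^3}\Big)ds.$$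
   Context: Notation: $(\xi,\eta)^\perp=(\eta,-\xi)$; for a regular curve $\gamma\in C^2([0,2L],\mathbb R^2)$, curvature $H=\langle\dot\gamma,\ddot\gamma^\perp\rangle/|\dot\gamma|^3$, normal $N=\dot\gamma^\perp/|\dot\gamma|$; strictly counterclockwise means $H>0$. A curve $\gamma=(x,y)$ is admissible if $\gamma\in C^\infty([0,2L],\mathbb R^2)$ is regular, strictly counterclockwise, injective, $\gamma(0)=(x_0,0)$, $\gamma(2L)=(-x_0,0)$, $y>0$ on $(0,2L)$. $\mathcal A(\gamma)=\frac12\int_0^{2L}(x\dot y-\dot xy)ds$, $\mathcal F(\gamma)=\int_0^{2L}|\dot\gamma|H^{-1}ds$. An admissible variation is a smooth $\mathcal V:[0,2L]\times[-t_{\mathcal V},t_{\mathcal V}]\to\mathbb R^2$ with $\mathcal V(\cdot,0)=\gamma$ and every $\mathcal V(\cdot,t)$ admissible; $X=\partial_t\mathcal V|_{t=0}$, $X'=\partial_t^2\mathcal V|_{t=0}$. For $0<3x_0<L$: with $\sigma=\pi\sqrt{x_0/(L+x_0)}$, $k=L/\sin\sigma$, $a(s)=\arcsin((s-L)/k)$, $\gamma(x_0,L)=(x,y)$ on $[0,2L]$ with $x(s)=-\frac k2\big(\frac{\sigma}{\pi+\sigma}\sin(\tfrac{\pi+\sigma}{\sigma}a(s))+\frac{\sigma}{\pi-\sigma}\sin(\tfrac{\pi-\sigma}{\sigma}a(s))\big)$, $y(s)=\frac k2\big(\frac{\sigma}{\pi+\sigma}\cos(\tfrac{\pi+\sigma}{\sigma}a(s))+\frac{\sigma}{\pi-\sigma}\cos(\tfrac{\pi-\sigma}{\sigma}a(s))\big)+\frac{\pi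 x_0}{\sigma\tan\sigma}$; it is admissible, arc-length parametrized, with curvature $H(s)=\frac{\pi}{\sigma\sqrt{k^2-(s-L)^2}}$. *)

theory Defs
  imports "HOL-Analysis.Analysis"
begin

definition perp :: "real \<times> real \<Rightarrow> real \<times> real" where
  "perp v = (snd v, - fst v)"

definition Ds :: "real \<Rightarrow> (real \<Rightarrow> 'a::real_normed_vector) \<Rightarrow> real \<Rightarrow> 'a" where
  "Ds L f s = vector_derivative f (at s within {0..2*L})"

definition smooth_on_ivl :: "real set \<Rightarrow> (real \<Rightarrow> 'a::real_normed_vector) \<Rightarrow> bool" where
  "smooth_on_ivl S f \<longleftrightarrow> (\<exists>Df. Df 0 = f \<and>
     (\<forall>n. \<forall>x\<in>S. (Df n has_vector_derivative Df (Suc n) x) (at x within S)))"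

definition smooth_on_rect ::
  "real set \<Rightarrow> real set \<Rightarrow> (real \<Rightarrow> real \<Rightarrow> 'a::real_normed_vector) \<Rightarrow> bool" where
  "smooth_on_rect S T V \<longleftrightarrow> (\<exists>D. D 0 0 = V \<and>
     (\<forall>i j. continuous_on (S \<times> T) (\<lambda>(s,t). D i j s t) \<and>
        (\<forall>s\<in>S. \<forall>t\<in>T.
           ((\<lambda>s. D i j s t) has_vector_derivative D (Suc i) j s t) (at s within S) \<and>
           ((\<lambda>t. D i j s t) has_vector_derivative D i (Suc j) s t) (at t within T))))"

definition curvature :: "real \<Rightarrow> (real \<Rightarrow> real \<times> real) \<Rightarrow> real \<Rightarrow> real" where
  "curvature L c s = inner (Ds L c s) (perp (Ds L (Ds L c) s)) / norm (Ds L c s) ^ 3"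

definition normal :: "real \<Rightarrow> (real \<Rightarrow> real \<times> real) \<Rightarrow> real \<Rightarrow> real \<times> real" where
  "normal L c s = perp (Ds L c s) /\<^sub>R norm (Ds L c s)"

definition admissible :: "real \<Rightarrow> real \<Rightarrow> (real \<Rightarrow> real \<times> real) \<Rightarrow> bool" where
  "admissible x0 L c \<longleftrightarrow>
     smooth_on_ivl {0..2*L} c \<and>
     (\<forall>s\<in>{0..2*L}. Ds L c s \<noteq> 0) \<and>
     (\<forall>s\<in>{0..2*L}. curvature L c s > 0) \<and>
     inj_on c {0..2*L} \<and>
     c 0 = (x0, 0) \<and> c (2*L) = (- x0, 0) \<and>
     (\<forall>s\<in>{0<..<2*L}. snd (c s) > 0)"

definition area :: "real \<Rightarrow> (real \<Rightarrow> real \<times> real) \<Rightarrow> real" where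
  "area L c = 1/2 * integral {0..2*L}
      (\<lambda>s. fst (c s) * snd (Ds L c s) - fst (Ds L c s) * snd (c s))"

definition Fenergy :: "real \<Rightarrow> (real \<Rightarrow> real \<times> real) \<Rightarrow> real" where
  "Fenergy L c = integral {0..2*L} (\<lambda>s. norm (Ds L c s) / curvature L c s)"

definition gamma_sig :: "real \<Rightarrow> real \<Rightarrow> real" where
  "gamma_sig x0 L = pi * sqrt (x0 / (L + x0))"

definition gamma_k :: "real \<Rightarrow> real \<Rightarrow> real" where
  "gamma_k x0 L = L / sin (gamma_sig x0 L)"

definition gamma_curve :: "real \<Rightarrow> real \<Rightarrow> real \<Rightarrow> real \<times> real" where
  "gamma_curve x0 L s =
    (let \<sigma> = gamma_sig x0 L; k = gamma_k x0 L; a = arcsin ((s - L) / k) in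
     (- k/2 * (\<sigma>/(pi+\<sigma>) * sin ((pi+\<sigma>)/\<sigma> * a) + \<sigma>/(pi-\<sigma>) * sin ((pi-\<sigma>)/\<sigma> * a)),
        k/2 * (\<sigma>/(pi+\<sigma>) * cos ((pi+\<sigma>)/\<sigma> * a) + \<sigma>/(pi-\<sigma>) * cos ((pi-\<sigma>)/\<sigma> * a))
        + pi * x0 / (\<sigma> * tan \<sigma>)))"

definition lam :: "real \<Rightarrow> real \<Rightarrow> real" where
  "lam x0 L = 2 * L / (L + x0)"

end

theory Submission
  imports Defs
begin

definition cr :: "real \<times> real \<Rightarrow> real \<times> real \<Rightarrow> real" where
  "cr a b = fst a * snd b - snd a * fst b"

lemma inner_pair_eq: "inner a (b::real\<times>real) = fst a * fst b + snd a * snd b"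
  by (cases a; cases b) (simp add: inner_Pair)

lemma inner_perp: "inner a (perp b) = cr a b"
  by (simp add: inner_pair_eq perp_def cr_def)

lemma vd_fst:
  assumes "(f has_vector_derivative f') F"
  shows "((\<lambda>x. fst (f x)) has_real_derivative fst f') F"
proof -
  have "((\<lambda>x. fst (f x)) has_derivative (\<lambda>h. fst (h *\<^sub>R f'))) F"
    using assms unfolding has_vector_derivative_def by (rule has_derivative_fst)
  moreover have "(\<lambda>h. h * fst f') = (*) (fst f')" by (auto simp: fun_eq_iff)
  ultimately show ?thesis unfolding has_field_derivative_def by simp
qed

lemma vd_snd:
  assumes "(f has_vector_derivative f') F"
  shows "((\<lambda>x. snd (f x)) has_real_derivative snd f') F"
proof -
  have "((\<lambda>x. snd (f x)) has_derivative (\<lambda>h. snd (h *\<^sub>R f'))) F"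
    using assms unfolding has_vector_derivative_def by (rule has_derivative_snd)
  moreover have "(\<lambda>h. h * snd f') = (*) (snd f')" by (auto simp: fun_eq_iff)
  ultimately show ?thesis unfolding has_field_derivative_def by simp
qed

lemma vd_cr:
  assumes "(a has_vector_derivative a') (at x within S)"
    and "(b has_vector_derivative b') (at x within S)"
  shows "((\<lambda>x. cr (a x) (b x)) has_real_derivative (cr a' (b x) + cr (a x) b')) (at x within S)"
  unfolding cr_def
  apply (rule DERIV_cong)
   apply (rule derivative_eq_intros vd_fst vd_snd assms refl)+
  apply (simp add: algebra_simps)
  done

lemma vd_inner:
  fixes a b :: "real \<Rightarrow> real \<times> real"
  assumes "(a has_vector_derivative a') (at x within S)"
    and "(b has_vector_derivative b') (at x within S)"
  shows "((\<lambda>x. inner (a x) (b x)) has_real_derivative (inner a' (b x) + inner (a x) b')) (at x within S)"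
  apply (simp only: inner_pair_eq)
  apply (rule DERIV_cong)
   apply (rule derivative_eq_intros vd_fst vd_snd assms refl)+
  apply (simp add: algebra_simps)
  done

lemma frame_cr:
  assumes "(fst T)^2 + (snd T)^2 = 1"
  shows "cr a b = inner a (perp T) * inner b T - inner a T * inner b (perp T)"
proof -
  have "inner a (perp T) * inner b T - inner a T * inner b (perp T) = ((fst T)^2 + (snd T)^2) * cr a b"
    by (simp add: inner_pair_eq perp_def cr_def power2_eq_square algebra_simps)
  then show ?thesis using assms by simp
qed

lemma frame_inner:
  assumes "(fst T)^2 + (snd T)^2 = 1"
  shows "inner a b = inner a (perp T) * inner b (perp T) + inner a T * inner b T"
proof -
  have "inner a (perp T) * inner b (perp T) + inner a T * inner b T = ((fst T)^2 + (snd T)^2) * inner a b"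
    by (simp add: inner_pair_eq perp_def power2_eq_square algebra_simps)
  then show ?thesis using assms by simp
qed

lemma frame_vec:
  assumes "(fst T)^2 + (snd T)^2 = 1"
  shows "a = inner a (perp T) *\<^sub>R perp T + inner a T *\<^sub>R T"
proof -
  have "inner a (perp T) *\<^sub>R perp T + inner a T *\<^sub>R T = ((fst T)^2 + (snd T)^2) *\<^sub>R a"
    by (cases a; cases T) (simp add: inner_pair_eq perp_def power2_eq_square algebra_simps)
  then show ?thesis using assms by simp
qed

lemma deriv_unique_ivl:
  fixes f :: "real \<Rightarrow> real \<times> real"
  assumes "a < b" "x \<in> {a..b}"
    "(f has_vector_derivative f1) (at x within {a..b})"
    "(f has_vector_derivative f2) (at x within {a..b})"
  shows "f1 = f2"
  using vector_derivative_within_closed_interval[OF assms(1,2,3)]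
    vector_derivative_within_closed_interval[OF assms(1,2,4)] by simp

lemma swap_cont:
  assumes "continuous_on (S \<times> T) (\<lambda>(s,t). F s t)"
  shows "continuous_on (T \<times> S) (\<lambda>(t,s). F s t)"
proof -
  have "continuous_on (T \<times> S) ((\<lambda>(s,t). F s t) \<circ> (\<lambda>(t,s). (s,t)))"
    apply (rule continuous_on_compose)
     apply (auto intro!: continuous_intros simp: split_beta)
    apply (rule continuous_on_subset[of "S \<times> T"])
    using assms by (auto simp: split_beta)
  then show ?thesis by (simp add: o_def split_beta)
qed

definition "aF x0 L s = arcsin ((s - L) / gamma_k x0 L)"
definition "wF x0 L s = (gamma_k x0 L)^2 - (s - L)^2"
definition "HF x0 L s = pi / (gamma_sig x0 L * sqrt (wF x0 L s))"
definition "H1F x0 L s = HF x0 L s * (s - L) / wF x0 L s"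
definition "H2F x0 L s = 3 * HF x0 L s * (s - L)^2 / (wF x0 L s)^2 + HF x0 L s / wF x0 L s"
definition "thF x0 L s = pi / gamma_sig x0 L * aF x0 L s"
definition "TF x0 L s = (- cos (thF x0 L s), - sin (thF x0 L s))"
definition "NF x0 L s = (- sin (thF x0 L s), cos (thF x0 L s))"

lemma perp_TF: "perp (TF x0 L s) = NF x0 L s"
  by (simp add: perp_def TF_def NF_def)

lemma TF_unit: "(fst (TF x0 L s))^2 + (snd (TF x0 L s))^2 = 1"
  by (simp add: TF_def)

lemma cr_TF_NF: "cr (TF x0 L s) (NF x0 L s) = -1"
proof -
  have "cr (TF x0 L s) (NF x0 L s) = - ((sin (thF x0 L s))^2 + (cos (thF x0 L s))^2)"
    by (simp add: TF_def NF_def cr_def power2_eq_square)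
  then show ?thesis by simp
qed

lemma aux_cancel: "(p::real) > 0 \<Longrightarrow> w > 0 \<Longrightarrow> p * (pi^2 / (pi^2 * p * w)) * h = h / w"
  by (simp add: field_simps)

context
  fixes x0 L :: real
  assumes x0pos: "0 < 3 * x0" and x0L: "3 * x0 < L"
begin

private abbreviation "sg \<equiv> gamma_sig x0 L"
private abbreviation "kk \<equiv> gamma_k x0 L"

lemma Lpos: "0 < L" using x0pos x0L by linarith

lemma sg_sq: "sg^2 = pi^2 * (x0 / (L + x0))"
  using x0pos x0L by (simp add: gamma_sig_def power_mult_distrib)

lemma sg_bounds: "0 < sg" "sg < pi/2"
proof -
  have q0: "0 < x0 / (L + x0)" using x0pos x0L by simp
  have q1: "x0 / (L + x0) < 1/4" using x0pos x0L by (simp add: field_simps)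
  show "0 < sg" using q0 by (simp add: gamma_sig_def)
  have "sqrt (x0 / (L + x0)) < sqrt (1/4)" using q1 by (simp only: real_sqrt_less_iff)
  moreover have "sqrt (1/4::real) = 1/2" by (simp add: real_sqrt_divide)
  ultimately have "sqrt (x0 / (L + x0)) < 1/2" by simp
  then show "sg < pi/2" by (simp add: gamma_sig_def)
qed

lemma sin_sg: "0 < sin sg" "sin sg < 1"
proof -
  show "0 < sin sg" using sg_bounds by (intro sin_gt_zero) auto
  have "sin sg < sin (pi/2)" using sg_bounds by (intro sin_monotone_2pi) auto
  then show "sin sg < 1" by simp
qed

lemma kk_gt: "L < kk" "0 < kk"
  using sin_sg Lpos by (auto simp: gamma_k_def field_simps)

lemma L_over_kk: "L / kk = sin sg"
  using sin_sg Lpos by (simp add: gamma_k_def)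

lemma wF_pos: "\<bar>s - L\<bar> < kk \<Longrightarrow> 0 < wF x0 L s"
  unfolding wF_def using kk_gt
  by (metis abs_ge_zero abs_power2 diff_gt_0_iff_gt power2_abs power_strict_mono zero_less_numeral)

lemma z_bounds: "\<bar>s - L\<bar> < kk \<Longrightarrow> - 1 < (s - L) / kk \<and> (s - L) / kk < 1"
  using kk_gt by (auto simp: field_simps abs_less_iff)

lemma sqrt_w: "\<bar>s - L\<bar> < kk \<Longrightarrow> sqrt (wF x0 L s) = kk * sqrt (1 - ((s - L) / kk)^2)"
proof -
  assume "\<bar>s - L\<bar> < kk"
  have "wF x0 L s = kk^2 * (1 - ((s - L) / kk)^2)"
    using kk_gt by (simp add: wF_def field_simps)
  then show ?thesis using kk_gt by (simp add: real_sqrt_mult)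
qed

lemma da: "\<bar>s - L\<bar> < kk \<Longrightarrow> (aF x0 L has_real_derivative 1 / sqrt (wF x0 L s)) (at s)"
proof -
  assume a: "\<bar>s - L\<bar> < kk"
  note zb = z_bounds[OF a]
  have l: "((\<lambda>s. (s - L) / kk) has_real_derivative 1 / kk) (at s)"
    using kk_gt by (auto intro!: derivative_eq_intros)
  have "((\<lambda>s. arcsin ((s - L) / kk)) has_real_derivative
      inverse (sqrt (1 - ((s - L) / kk)^2)) * (1 / kk)) (at s)"
    using DERIV_chain2[OF DERIV_arcsin l] zb by simp
  moreover have "inverse (sqrt (1 - ((s - L) / kk)^2)) * (1 / kk) = 1 / sqrt (wF x0 L s)"
    using sqrt_w[OF a] kk_gt by (simp add: field_simps)
  ultimately show ?thesis by (simp add: aF_def[abs_def])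
qed

lemma cos_aF: "\<bar>s - L\<bar> < kk \<Longrightarrow> cos (aF x0 L s) = sqrt (wF x0 L s) / kk"
proof -
  assume a: "\<bar>s - L\<bar> < kk"
  note zb = z_bounds[OF a]
  have "cos (aF x0 L s) = sqrt (1 - ((s - L) / kk)^2)"
    unfolding aF_def using zb by (intro cos_arcsin) auto
  then show ?thesis using sqrt_w[OF a] kk_gt by (simp add: field_simps)
qed

lemma gamma_eq: "gamma_curve x0 L s =
   (- kk/2 * (sg/(pi+sg) * sin ((pi+sg)/sg * aF x0 L s) + sg/(pi-sg) * sin ((pi-sg)/sg * aF x0 L s)),
    kk/2 * (sg/(pi+sg) * cos ((pi+sg)/sg * aF x0 L s) + sg/(pi-sg) * cos ((pi-sg)/sg * aF x0 L s))
        + pi * x0 / (sg * tan sg))"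
  by (simp add: gamma_curve_def aF_def Let_def)

lemma gamma_deriv: "\<bar>s - L\<bar> < kk \<Longrightarrow> (gamma_curve x0 L has_vector_derivative TF x0 L s) (at s)"
proof -
  assume a: "\<bar>s - L\<bar> < kk"
  define A where "A = pi / sg * aF x0 L s"
  define b where "b = aF x0 L s"
  have sgpos: "0 < sg" "sg < pi/2" by (rule sg_bounds)+
  have e1: "(pi+sg)/sg * b = A + b" and e2: "(pi-sg)/sg * b = A - b"
    using sgpos by (simp_all add: A_def b_def field_simps)
  have w: "0 < wF x0 L s" by (rule wF_pos[OF a])
  have sw: "0 < sqrt (wF x0 L s)" using w by simp
  have cb: "cos b = sqrt (wF x0 L s) / kk" unfolding b_def by (rule cos_aF[OF a])
  have n1: "pi + sg \<noteq> 0" "pi - sg \<noteq> 0" "sg \<noteq> 0" using sgpos pi_gt_zero by linarith+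
  note dA = da[OF a]
  have c1: "(pi+sg)/sg * (sg/(pi+sg)) = 1" and c2: "(pi-sg)/sg * (sg/(pi-sg)) = 1"
    using n1 by simp_all
  have key1: "cos (A+b) + cos (A-b) = 2 * cos A * (sqrt (wF x0 L s) / kk)"
    by (simp add: cos_add cos_diff cb[symmetric])
  have key2: "sin (A+b) + sin (A-b) = 2 * sin A * (sqrt (wF x0 L s) / kk)"
    by (simp add: sin_add sin_diff cb[symmetric])
  have d1: "((\<lambda>s. - kk/2 * (sg/(pi+sg) * sin ((pi+sg)/sg * aF x0 L s) + sg/(pi-sg) * sin ((pi-sg)/sg * aF x0 L s)))
     has_real_derivative - cos A) (at s)"
    apply (rule DERIV_cong)
     apply (rule derivative_eq_intros dA refl)+
    unfolding b_def[symmetric] e1 e2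
    apply (simp only: mult_zero_left add_0_left add_0 mult.assoc c1 c2 mult_1_right)
    using key1 sw kk_gt by (simp add: field_simps)
  have d2: "((\<lambda>s. kk/2 * (sg/(pi+sg) * cos ((pi+sg)/sg * aF x0 L s) + sg/(pi-sg) * cos ((pi-sg)/sg * aF x0 L s))
        + pi * x0 / (sg * tan sg))
     has_real_derivative - sin A) (at s)"
    apply (rule DERIV_cong)
     apply (rule derivative_eq_intros dA refl)+
    unfolding b_def[symmetric] e1 e2
    apply (simp only: mult_zero_left add_0_left add_0 mult.assoc c1 c2 mult_1_right)
    using key2 sw kk_gt by (simp add: field_simps)
  have "((\<lambda>s. (- kk/2 * (sg/(pi+sg) * sin ((pi+sg)/sg * aF x0 L s) + sg/(pi-sg) * sin ((pi-sg)/sg * aF x0 L s)),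
    kk/2 * (sg/(pi+sg) * cos ((pi+sg)/sg * aF x0 L s) + sg/(pi-sg) * cos ((pi-sg)/sg * aF x0 L s))
        + pi * x0 / (sg * tan sg))) has_vector_derivative (- cos A, - sin A)) (at s)"
    by (rule has_vector_derivative_Pair)
       (use d1 d2 in \<open>simp_all add: has_real_derivative_iff_has_vector_derivative\<close>)
  moreover have "(\<lambda>s. gamma_curve x0 L s) = (\<lambda>s. (- kk/2 * (sg/(pi+sg) * sin ((pi+sg)/sg * aF x0 L s) + sg/(pi-sg) * sin ((pi-sg)/sg * aF x0 L s)),
    kk/2 * (sg/(pi+sg) * cos ((pi+sg)/sg * aF x0 L s) + sg/(pi-sg) * cos ((pi-sg)/sg * aF x0 L s))
        + pi * x0 / (sg * tan sg)))" using gamma_eq by auto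
  ultimately show ?thesis by (simp add: TF_def thF_def A_def)
qed

lemma HF_pos: "\<bar>s - L\<bar> < kk \<Longrightarrow> 0 < HF x0 L s"
  using wF_pos[of s] sg_bounds by (simp add: HF_def)

lemma dth: "\<bar>s - L\<bar> < kk \<Longrightarrow> (thF x0 L has_real_derivative HF x0 L s) (at s)"
proof -
  assume a: "\<bar>s - L\<bar> < kk"
  have "((\<lambda>s. pi / sg * aF x0 L s) has_real_derivative pi / sg * (1 / sqrt (wF x0 L s))) (at s)"
    by (rule DERIV_cmult[OF da[OF a]])
  then show ?thesis by (simp add: thF_def[abs_def] HF_def)
qed

lemma dTF: "\<bar>s - L\<bar> < kk \<Longrightarrow> (TF x0 L has_vector_derivative (- HF x0 L s) *\<^sub>R NF x0 L s) (at s)"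
proof -
  assume a: "\<bar>s - L\<bar> < kk"
  note d = dth[OF a]
  have "((\<lambda>s. (- cos (thF x0 L s), - sin (thF x0 L s))) has_vector_derivative
     (sin (thF x0 L s) * HF x0 L s, - (cos (thF x0 L s) * HF x0 L s))) (at s)"
    apply (rule has_vector_derivative_Pair)
    unfolding has_real_derivative_iff_has_vector_derivative[symmetric]
     apply (rule derivative_eq_intros d refl | simp)+
    done
  then show ?thesis by (simp add: TF_def[abs_def] NF_def mult.commute)
qed

lemma dNF: "\<bar>s - L\<bar> < kk \<Longrightarrow> (NF x0 L has_vector_derivative HF x0 L s *\<^sub>R TF x0 L s) (at s)"
proof -
  assume a: "\<bar>s - L\<bar> < kk"
  note d = dth[OF a]
  have "((\<lambda>s. (- sin (thF x0 L s), cos (thF x0 L s))) has_vector_derivative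
     (- (cos (thF x0 L s) * HF x0 L s), - (sin (thF x0 L s) * HF x0 L s))) (at s)"
    apply (rule has_vector_derivative_Pair)
    unfolding has_real_derivative_iff_has_vector_derivative[symmetric]
     apply (rule derivative_eq_intros d refl | simp)+
    done
  then show ?thesis by (simp add: TF_def NF_def[abs_def] mult.commute)
qed

lemma dHF: "\<bar>s - L\<bar> < kk \<Longrightarrow> (HF x0 L has_real_derivative H1F x0 L s) (at s)"
proof -
  assume a: "\<bar>s - L\<bar> < kk"
  have w: "0 < wF x0 L s" by (rule wF_pos[OF a])
  have sg: "0 < sg" using sg_bounds by simp
  have dw: "((\<lambda>s. wF x0 L s) has_real_derivative - 2 * (s - L)) (at s)"
    unfolding wF_def[abs_def] by (auto intro!: derivative_eq_intros)
  have "((\<lambda>s. pi / (sg * sqrt (wF x0 L s))) has_real_derivative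
       - (pi * (sg * (inverse (sqrt (wF x0 L s)) / 2 * (- 2 * (s - L))))) / (sg * sqrt (wF x0 L s))^2) (at s)"
    apply (rule DERIV_cong)
     apply (rule derivative_eq_intros dw refl | (use w sg in simp; fail))+
    by (simp add: power2_eq_square)
  moreover have "- (pi * (sg * (inverse (sqrt (wF x0 L s)) / 2 * (- 2 * (s - L))))) / (sg * sqrt (wF x0 L s))^2
     = H1F x0 L s"
    using w sg by (simp add: H1F_def HF_def field_simps power2_eq_square)
  ultimately show ?thesis by (simp add: HF_def[abs_def])
qed

lemma dH1F: "\<bar>s - L\<bar> < kk \<Longrightarrow> (H1F x0 L has_real_derivative H2F x0 L s) (at s)"
proof -
  assume a: "\<bar>s - L\<bar> < kk"
  have w: "0 < wF x0 L s" by (rule wF_pos[OF a])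
  have dw: "((\<lambda>s. wF x0 L s) has_real_derivative - 2 * (s - L)) (at s)"
    unfolding wF_def[abs_def] by (auto intro!: derivative_eq_intros)
  have "((\<lambda>s. HF x0 L s * (s - L) / wF x0 L s) has_real_derivative
     ((H1F x0 L s * (s - L) + HF x0 L s * 1) * wF x0 L s - HF x0 L s * (s - L) * (- 2 * (s - L))) / (wF x0 L s * wF x0 L s)) (at s)"
    apply (rule DERIV_cong)
     apply (rule derivative_eq_intros dw dHF[OF a] refl | (use w in simp; fail))+
    done
  moreover have "((H1F x0 L s * (s - L) + HF x0 L s * 1) * wF x0 L s - HF x0 L s * (s - L) * (- 2 * (s - L))) / (wF x0 L s * wF x0 L s)
     = H2F x0 L s"
    using w by (simp add: H1F_def H2F_def field_simps power2_eq_square)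
  ultimately show ?thesis by (simp add: H1F_def[abs_def])
qed

lemma EL: "\<bar>s - L\<bar> < kk \<Longrightarrow>
   H2F x0 L s = 3 * (H1F x0 L s)^2 / HF x0 L s + (2 - lam x0 L) * (HF x0 L s)^3 / 2"
proof -
  assume a: "\<bar>s - L\<bar> < kk"
  have w: "0 < wF x0 L s" by (rule wF_pos[OF a])
  have sg: "0 < sg" using sg_bounds by simp
  have H: "0 < HF x0 L s" by (rule HF_pos[OF a])
  have Hsq: "(HF x0 L s)^2 = pi^2 / (sg^2 * wF x0 L s)"
    using w by (simp add: HF_def power_divide power_mult_distrib)
  have l: "(2 - lam x0 L) / 2 = x0 / (L + x0)"
    using x0pos x0L by (simp add: lam_def field_simps)
  have "(2 - lam x0 L) * (HF x0 L s)^3 / 2 = HF x0 L s / wF x0 L s"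
  proof -
    have "(2 - lam x0 L) * (HF x0 L s)^3 / 2 = (2 - lam x0 L) / 2 * (HF x0 L s)^2 * HF x0 L s"
      by (simp add: power3_eq_cube power2_eq_square)
    also have "\<dots> = x0 / (L + x0) * (pi^2 / (sg^2 * wF x0 L s)) * HF x0 L s"
      by (simp only: l Hsq)
    also have "\<dots> = HF x0 L s / wF x0 L s"
      unfolding sg_sq using x0pos x0L w by (intro aux_cancel) auto
    finally show ?thesis .
  qed
  moreover have "3 * (H1F x0 L s)^2 / HF x0 L s = 3 * HF x0 L s * (s - L)^2 / (wF x0 L s)^2"
    using H w by (simp add: H1F_def field_simps power2_eq_square)
  ultimately show ?thesis by (simp add: H2F_def)
qed

lemma in_range: "s \<in> {0..2*L} \<Longrightarrow> \<bar>s - L\<bar> < kk"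
  using kk_gt by auto

lemma aF_ends: "aF x0 L 0 = - sg" "aF x0 L (2*L) = sg"
proof -
  have r: "arcsin (sin sg) = sg" using sg_bounds by (intro arcsin_sin) auto
  have "(0 - L) / kk = - sin sg" using L_over_kk by simp
  then show "aF x0 L 0 = - sg"
    using r sin_sg by (simp add: aF_def arcsin_minus)
  have "(2*L - L) / kk = sin sg" using L_over_kk by simp
  then show "aF x0 L (2*L) = sg" using r by (simp add: aF_def)
qed

lemma TF_ends: "TF x0 L 0 = (1, 0)" "TF x0 L (2*L) = (1, 0)"
  "NF x0 L 0 = (0, -1)" "NF x0 L (2*L) = (0, -1)"
  using aF_ends sg_bounds by (simp_all add: TF_def NF_def thF_def)

end

lemma interior_ivl: "t \<in> {-T<..<T} \<Longrightarrow> at t within {-T..T} = at (t::real)"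
  by (rule at_within_interior) simp

lemma deriv_left_end:
  fixes h :: "real \<Rightarrow> real"
  assumes ab: "a < b" and d: "(h has_real_derivative d) (at a within {a..b})"
    and h0: "h a = 0" and hp: "\<And>s. s \<in> {a<..<b} \<Longrightarrow> 0 < h s"
  shows "0 \<le> d"
proof (rule ccontr)
  assume "\<not> 0 \<le> d"
  then have dn: "d < 0" by simp
  from d[unfolded has_field_derivative_iff]
  have "eventually (\<lambda>y. (h y - h a) / (y - a) < 0) (at a within {a..b})"
    using dn by (rule order_tendstoD(2))
  then obtain e where e: "e > 0" "\<And>y. y \<in> {a..b} \<Longrightarrow> y \<noteq> a \<Longrightarrow> dist y a < e \<Longrightarrow> (h y - h a) / (y - a) < 0"
    unfolding eventually_at by auto
  define mm where "mm = min e (b - a)"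
  define y where "y = a + mm / 2"
  have m: "0 < mm" "mm \<le> b - a" "mm \<le> e" using e ab unfolding mm_def by auto
  have y1: "a < y" using m unfolding y_def by linarith
  have y2: "y < b" using m unfolding y_def by linarith
  have y3: "dist y a = mm / 2" using m unfolding y_def dist_real_def by simp
  have y: "a < y" "y < b" "dist y a < e" using y1 y2 y3 m by auto
  have "(h y - h a) / (y - a) < 0" using e(2)[of y] y by auto
  moreover have "0 < (h y - h a) / (y - a)" using hp[of y] y h0 by simp
  ultimately show False by simp
qed

lemma deriv_right_end:
  fixes h :: "real \<Rightarrow> real"
  assumes ab: "a < b" and d: "(h has_real_derivative d) (at b within {a..b})"
    and h0: "h b = 0" and hp: "\<And>s. s \<in> {a<..<b} \<Longrightarrow> 0 < h s"
  shows "d \<le> 0"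
proof (rule ccontr)
  assume "\<not> d \<le> 0"
  then have dn: "0 < d" by simp
  from d[unfolded has_field_derivative_iff]
  have "eventually (\<lambda>y. 0 < (h y - h b) / (y - b)) (at b within {a..b})"
    using dn by (rule order_tendstoD(1))
  then obtain e where e: "e > 0" "\<And>y. y \<in> {a..b} \<Longrightarrow> y \<noteq> b \<Longrightarrow> dist y b < e \<Longrightarrow> 0 < (h y - h b) / (y - b)"
    unfolding eventually_at by auto
  define mm where "mm = min e (b - a)"
  define y where "y = b - mm / 2"
  have m: "0 < mm" "mm \<le> b - a" "mm \<le> e" using e ab unfolding mm_def by auto
  have y1: "a < y" using m unfolding y_def by linarith
  have y2: "y < b" using m unfolding y_def by linarith
  have y3: "dist y b = mm / 2" using m unfolding y_def dist_real_def by simp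
  have y: "a < y" "y < b" "dist y b < e" using y1 y2 y3 m by auto
  have "0 < (h y - h b) / (y - b)" using e(2)[of y] y by auto
  moreover have "(h y - h b) / (y - b) < 0" using hp[of y] y h0 by (simp add: divide_pos_neg)
  ultimately show False by simp
qed

lemma min2:
  fixes f f1 :: "real \<Rightarrow> real"
  assumes T: "0 < T" and mn: "\<And>t. t \<in> {-T..T} \<Longrightarrow> f 0 \<le> f t"
    and d: "\<And>t. t \<in> {-T..T} \<Longrightarrow> (f has_real_derivative f1 t) (at t within {-T..T})"
    and d1: "(f1 has_real_derivative c) (at 0 within {-T..T})"
  shows "f1 0 = 0 \<and> 0 \<le> c"
proof -
  have d': "(f has_real_derivative f1 t) (at t)" if "t \<in> {-T<..<T}" for t
  proof -
    have "t \<in> {-T..T}" using that by auto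
    then show ?thesis using d[of t] interior_ivl[OF that] by simp
  qed
  have f10: "f1 0 = 0"
    apply (rule DERIV_local_min[OF d'[of 0] T])
    using T apply simp
    using mn by (auto simp: abs_less_iff)
  have c: "(f1 has_real_derivative c) (at 0)"
    using d1 interior_ivl[of 0 T] T by simp
  have "0 \<le> c"
  proof (rule ccontr)
    assume "\<not> 0 \<le> c"
    then have cneg: "c < 0" by simp
    from c[unfolded has_field_derivative_iff] f10
    have "((\<lambda>y. f1 y / y) \<longlongrightarrow> c) (at 0)" by simp
    then have "eventually (\<lambda>y. f1 y / y < 0) (at 0)"
      using cneg by (rule order_tendstoD(2))
    then obtain e where e: "e > 0" "\<And>y. y \<noteq> 0 \<Longrightarrow> dist y 0 < e \<Longrightarrow> f1 y / y < 0"
      unfolding eventually_at by auto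
    define t1 where "t1 = min e T / 2"
    have t1: "0 < t1" "t1 < e" "t1 < T" using e T by (auto simp: t1_def)
    have "\<exists>z. 0 < z \<and> z < t1 \<and> f t1 - f 0 = (t1 - 0) * f1 z"
      apply (rule MVT2[OF t1(1)])
      apply (rule d')
      using t1 by auto
    then obtain z where z: "0 < z" "z < t1" "f t1 - f 0 = t1 * f1 z" by auto
    have "f1 z / z < 0" using e(2)[of z] z t1 by auto
    then have "f1 z < 0" using z by (simp add: divide_less_0_iff)
    then have "t1 * f1 z < 0" using t1(1) by (rule mult_pos_neg[rotated])
    then have "f t1 < f 0" using z(3) by linarith
    moreover have "f 0 \<le> f t1" using mn t1 by auto
    ultimately show False by simp
  qed
  then show ?thesis using f10 by simp
qed

definition g0F :: "real \<Rightarrow> real\<times>real \<Rightarrow> real\<times>real \<Rightarrow> real\<times>real \<Rightarrow> real" where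
 "g0F lm d00 d10 d20 = (inner d10 d10)^2 / cr d10 d20 - lm/2 * cr d00 d10"

definition g1F :: "real \<Rightarrow> real\<times>real \<Rightarrow> real\<times>real \<Rightarrow> real\<times>real \<Rightarrow> real\<times>real \<Rightarrow> real\<times>real \<Rightarrow> real\<times>real \<Rightarrow> real" where
 "g1F lm d00 d10 d20 d01 d11 d21 = 2 * inner d10 d10 * (2 * inner d10 d11) / cr d10 d20
     - (inner d10 d10)^2 * (cr d11 d20 + cr d10 d21) / (cr d10 d20)^2
     - lm/2 * (cr d01 d10 + cr d00 d11)"

definition g2F :: "real \<Rightarrow> real\<times>real \<Rightarrow> real\<times>real \<Rightarrow> real\<times>real \<Rightarrow> real\<times>real \<Rightarrow> real\<times>real \<Rightarrow> real\<times>real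
   \<Rightarrow> real\<times>real \<Rightarrow> real\<times>real \<Rightarrow> real\<times>real \<Rightarrow> real" where
 "g2F lm d00 d10 d20 d01 d11 d21 d02 d12 d22 =
   (let P = inner d10 d10; Q = cr d10 d20; P1 = 2 * inner d10 d11; Q1 = cr d11 d20 + cr d10 d21;
        P2 = 2 * inner d11 d11 + 2 * inner d10 d12; Q2 = cr d12 d20 + 2 * cr d11 d21 + cr d10 d22
    in 2*P1^2/Q + 2*P*P2/Q - 4*P*P1*Q1/Q^2 - P^2*Q2/Q^2 + 2*P^2*Q1^2/Q^3)
   - lm/2 * (cr d02 d10 + 2 * cr d01 d11 + cr d00 d12)"

lemma g0_deriv:
  fixes a00 a10 a20 :: "real \<Rightarrow> real \<times> real"
  assumes d00: "(a00 has_vector_derivative b00) (at x within S)"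
    and d10: "(a10 has_vector_derivative b10) (at x within S)"
    and d20: "(a20 has_vector_derivative b20) (at x within S)"
    and Q: "cr (a10 x) (a20 x) \<noteq> 0"
  shows "((\<lambda>t. g0F lm (a00 t) (a10 t) (a20 t)) has_real_derivative
           g1F lm (a00 x) (a10 x) (a20 x) b00 b10 b20) (at x within S)"
  unfolding g0F_def g1F_def
  apply (rule DERIV_cong)
   apply (rule derivative_eq_intros vd_inner vd_cr assms refl | (use Q in simp; fail))+
  using Q apply (simp add: inner_commute field_simps power2_eq_square)
  done

lemma g1_deriv:
  fixes a00 a10 a20 a01 a11 a21 :: "real \<Rightarrow> real \<times> real"
  assumes d00: "(a00 has_vector_derivative a01 x) (at x within S)"
    and d10: "(a10 has_vector_derivative a11 x) (at x within S)"
    and d20: "(a20 has_vector_derivative a21 x) (at x within S)"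
    and d01: "(a01 has_vector_derivative b02) (at x within S)"
    and d11: "(a11 has_vector_derivative b12) (at x within S)"
    and d21: "(a21 has_vector_derivative b22) (at x within S)"
    and Q: "cr (a10 x) (a20 x) \<noteq> 0"
  shows "((\<lambda>t. g1F lm (a00 t) (a10 t) (a20 t) (a01 t) (a11 t) (a21 t)) has_real_derivative
           g2F lm (a00 x) (a10 x) (a20 x) (a01 x) (a11 x) (a21 x) b02 b12 b22) (at x within S)"
  unfolding g1F_def g2F_def Let_def
  apply (rule DERIV_cong)
   apply (rule derivative_eq_intros vd_inner vd_cr assms refl | (use Q in simp; fail))+
  using Q apply (simp add: inner_commute field_simps power2_eq_square power3_eq_cube)
  done

definition PhiF :: "real \<Rightarrow> real \<Rightarrow> real \<Rightarrow> real \<Rightarrow> real \<Rightarrow> real \<Rightarrow> real \<Rightarrow> real \<Rightarrow> real \<Rightarrow> real \<Rightarrow> real \<Rightarrow> real \<Rightarrow> real" where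
  "PhiF H lm x0 y0 x1 y1 x2 y2 u0 u2 w1 C =
    (let P1 = 2*y1; P2 = 2*(x1^2 + y1^2) + 2*w1;
         Q1 = H*y1 - x2; Q2 = H*w1 + 2*(x1*y2 - y1*x2) - u2;
         A2 = u0 + 2*(x0*y1 - y0*x1) + C
     in 2*P1^2/H + 2*P2/H - 4*P1*Q1/H^2 - Q2/H^2 + 2*Q1^2/H^3 - lm/2*A2)"

definition IintF :: "real \<Rightarrow> real \<Rightarrow> real \<Rightarrow> real \<Rightarrow> real \<Rightarrow> real \<Rightarrow> real \<Rightarrow> real \<Rightarrow> real" where
  "IintF H H1 lm x0 x1 x2 y0 y1 = (2-lm)*H*x0^2 - 2*(x1 + H*y0)^2/H
             + 2*(x2 + 2*H*y1 + H1*y0 - H^2*x0)^2/H^3"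

definition RF :: "real \<Rightarrow> real \<Rightarrow> real \<Rightarrow> real \<Rightarrow> real \<Rightarrow> real \<Rightarrow> real \<Rightarrow> real \<Rightarrow> real \<Rightarrow> real \<Rightarrow> real \<Rightarrow> real" where
  "RF H H1 lm x0 x1 y0 y1 u0 u1 w0 Cg = 2*x0*(x1 + H*y0)/H + 2*y0*(y1 - H*x0)/H
             + 2*y0^2*H1/H^2 - 4*H1*(x1 + H*y0)*y0/H^3
             - 2*(x1 + H*y0)*(y1 - H*x0)/H^2 + (2-lm)*x0*y0
             + 2*w0/H + u1/H^2 + 2*u0*H1/H^3 - lm/2*Cg"

lemma core_deriv:
  fixes H H1 x0 x1 y0 y1 u0 u1 w0 Cg :: "real \<Rightarrow> real"
  assumes dH: "(H has_real_derivative H1 s) (at s within S)"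
    and dH1: "(H1 has_real_derivative H2) (at s within S)"
    and dx0: "(x0 has_real_derivative (x1 s + H s * y0 s)) (at s within S)"
    and dy0: "(y0 has_real_derivative (y1 s - H s * x0 s)) (at s within S)"
    and dx1: "(x1 has_real_derivative (x2 + H s * y1 s)) (at s within S)"
    and dy1: "(y1 has_real_derivative (y2 - H s * x1 s)) (at s within S)"
    and du0: "(u0 has_real_derivative (u1 s + H s * w0 s)) (at s within S)"
    and dw0: "(w0 has_real_derivative (w1 - H s * u0 s)) (at s within S)"
    and du1: "(u1 has_real_derivative (u2 + H s * w1)) (at s within S)"
    and dC: "(Cg has_real_derivative (C - u0 s)) (at s within S)"
    and Hpos: "H s > 0"
    and EL: "H2 = 3 * (H1 s)^2 / H s + (2 - lm) * (H s)^3 / 2"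
  shows "((\<lambda>s. RF (H s) (H1 s) lm (x0 s) (x1 s) (y0 s) (y1 s) (u0 s) (u1 s) (w0 s) (Cg s))
          has_real_derivative
          PhiF (H s) lm (x0 s) (y0 s) (x1 s) (y1 s) x2 y2 (u0 s) u2 w1 C
          - IintF (H s) (H1 s) lm (x0 s) (x1 s) x2 (y0 s) (y1 s)) (at s within S)"
  unfolding RF_def PhiF_def IintF_def
  apply (rule DERIV_cong)
   apply (rule derivative_eq_intros assms refl | (use Hpos in simp; fail))+
  unfolding EL Let_def
  using Hpos
  apply (simp add: field_simps power2_eq_square power3_eq_cube)
  done

lemma g2_frame:
  fixes T d00 d01 d11 d21 d02 d12 d22 :: "real \<times> real"
  assumes u: "(fst T)^2 + (snd T)^2 = 1" and H: "H > 0"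
  shows "g2F lm d00 T ((- H) *\<^sub>R perp T) d01 d11 d21 d02 d12 d22 =
    PhiF H lm (inner d01 (perp T)) (inner d01 T) (inner d11 (perp T)) (inner d11 T)
      (inner d21 (perp T)) (inner d21 T) (inner d02 (perp T)) (inner d22 (perp T)) (inner d12 T)
      (cr d00 d12)"
proof -
  have e1: "inner T T = 1" using u by (simp add: inner_pair_eq power2_eq_square)
  have e2: "cr T ((- H) *\<^sub>R perp T) = H" using u
    by (simp add: cr_def perp_def power2_eq_square algebra_simps)
      (metis distrib_left mult.commute mult_1_right)
  have e3: "\<And>d. cr d ((- H) *\<^sub>R perp T) = H * inner d T"
    by (simp add: cr_def perp_def inner_pair_eq algebra_simps)
  have e4: "\<And>d. cr T d = - inner d (perp T)"
    by (simp add: cr_def perp_def inner_pair_eq algebra_simps)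
  have e5: "\<And>d. cr d T = inner d (perp T)"
    by (simp add: cr_def perp_def inner_pair_eq algebra_simps)
  have e6: "inner d11 d11 = (inner d11 (perp T))^2 + (inner d11 T)^2"
    using frame_inner[OF u, of d11 d11] by (simp add: power2_eq_square)
  have e7: "cr d01 d11 = inner d01 (perp T) * inner d11 T - inner d01 T * inner d11 (perp T)"
    by (rule frame_cr[OF u])
  have e8: "cr d11 d21 = inner d11 (perp T) * inner d21 T - inner d11 T * inner d21 (perp T)"
    by (rule frame_cr[OF u])
  show ?thesis
    unfolding g2F_def PhiF_def Let_def e1 e2 e3 e4 e5 e6 e7 e8
    by (simp add: inner_commute algebra_simps)
qed

lemma cont_slice:
  assumes "continuous_on (S \<times> U) (\<lambda>(s,t). F s t)" "t \<in> U"
  shows "continuous_on S (\<lambda>s. F s t)"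
proof -
  have "continuous_on S ((\<lambda>(s,t). F s t) \<circ> (\<lambda>s. (s, t)))"
    apply (rule continuous_on_compose)
     apply (auto intro!: continuous_intros)
    apply (rule continuous_on_subset[OF assms(1)])
    using assms(2) by auto
  then show ?thesis by (simp add: o_def)
qed

lemma cont_g0:
  fixes a00 a10 a20 :: "'a::topological_space \<Rightarrow> real \<times> real"
  assumes "continuous_on X a00" "continuous_on X a10" "continuous_on X a20"
    "\<And>p. p \<in> X \<Longrightarrow> cr (a10 p) (a20 p) \<noteq> 0"
  shows "continuous_on X (\<lambda>p. g0F lm (a00 p) (a10 p) (a20 p))"
  using assms unfolding g0F_def cr_def inner_pair_eq
  by (auto intro!: continuous_intros)

lemma cont_g1:
  fixes a00 a10 a20 a01 a11 a21 :: "'a::topological_space \<Rightarrow> real \<times> real"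
  assumes "continuous_on X a00" "continuous_on X a10" "continuous_on X a20"
    "continuous_on X a01" "continuous_on X a11" "continuous_on X a21"
    "\<And>p. p \<in> X \<Longrightarrow> cr (a10 p) (a20 p) \<noteq> 0"
  shows "continuous_on X (\<lambda>p. g1F lm (a00 p) (a10 p) (a20 p) (a01 p) (a11 p) (a21 p))"
  using assms unfolding g1F_def cr_def inner_pair_eq
  by (auto intro!: continuous_intros)

lemma cont_g2:
  fixes a00 a10 a20 a01 a11 a21 a02 a12 a22 :: "'a::topological_space \<Rightarrow> real \<times> real"
  assumes "continuous_on X a00" "continuous_on X a10" "continuous_on X a20"
    "continuous_on X a01" "continuous_on X a11" "continuous_on X a21"
    "continuous_on X a02" "continuous_on X a12" "continuous_on X a22"
    "\<And>p. p \<in> X \<Longrightarrow> cr (a10 p) (a20 p) \<noteq> 0"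
  shows "continuous_on X (\<lambda>p. g2F lm (a00 p) (a10 p) (a20 p) (a01 p) (a11 p) (a21 p) (a02 p) (a12 p) (a22 p))"
  using assms unfolding g2F_def Let_def cr_def inner_pair_eq
  by (auto intro!: continuous_intros)

lemma normcurv:
  assumes "cr a b \<noteq> 0"
  shows "norm a / (inner a (perp b) / norm a ^ 3) = (inner a a)^2 / cr a b"
proof -
  have "a \<noteq> 0" using assms by (auto simp: cr_def)
  then have n: "norm a > 0" by simp
  have "(inner a a)^2 = norm a ^ 4" by (simp add: power2_norm_eq_inner[symmetric] power_mult[symmetric])
  moreover have "norm a * norm a ^ 3 = norm a ^ 4" by (simp add: power_numeral_reduce)
  ultimately show ?thesis using n assms by (simp add: inner_perp field_simps)
qed

lemma G_derivs:
  fixes D :: "nat \<Rightarrow> nat \<Rightarrow> real \<Rightarrow> real \<Rightarrow> real \<times> real" and V :: "real \<Rightarrow> real \<Rightarrow> real \<times> real"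
  assumes T: "0 < T" and L: "0 < L"
    and D0: "D 0 0 = V"
    and Dc: "\<And>i j. continuous_on ({0..2*L} \<times> {-T..T}) (\<lambda>(s,t). D i j s t)"
    and Ddt: "\<And>i j s t. s \<in> {0..2*L} \<Longrightarrow> t \<in> {-T..T} \<Longrightarrow>
       ((\<lambda>t. D i j s t) has_vector_derivative D i (Suc j) s t) (at t within {-T..T})"
    and Dds: "\<And>i j s t. s \<in> {0..2*L} \<Longrightarrow> t \<in> {-T..T} \<Longrightarrow>
       ((\<lambda>s. D i j s t) has_vector_derivative D (Suc i) j s t) (at s within {0..2*L})"
    and Qpos: "\<And>s t. s \<in> {0..2*L} \<Longrightarrow> t \<in> {-T..T} \<Longrightarrow> 0 < cr (D 1 0 s t) (D 2 0 s t)"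
  shows "\<forall>t\<in>{-T<..<T}. ((\<lambda>t. Fenergy L (\<lambda>s. V s t) - lm * area L (\<lambda>s. V s t)) has_real_derivative
            integral {0..2*L} (\<lambda>s. g1F lm (D 0 0 s t) (D 1 0 s t) (D 2 0 s t) (D 0 1 s t) (D 1 1 s t) (D 2 1 s t))) (at t)"
    and "((\<lambda>t. integral {0..2*L} (\<lambda>s. g1F lm (D 0 0 s t) (D 1 0 s t) (D 2 0 s t) (D 0 1 s t) (D 1 1 s t) (D 2 1 s t)))
           has_real_derivative integral {0..2*L} (\<lambda>s. g2F lm (D 0 0 s 0) (D 1 0 s 0) (D 2 0 s 0)
              (D 0 1 s 0) (D 1 1 s 0) (D 2 1 s 0) (D 0 2 s 0) (D 1 2 s 0) (D 2 2 s 0))) (at 0)"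
proof -
  define S where "S = {0..2*L}"
  define U where "U = {-T..T}"
  have cbS: "cbox 0 (2*L) = S" by (simp add: S_def)
  have cU: "convex U" by (simp add: U_def)
  have cD: "continuous_on (S \<times> U) (\<lambda>p. D i j (fst p) (snd p))" for i j
    using Dc[of i j] by (simp add: S_def U_def split_beta)
  have cDs: "continuous_on S (\<lambda>s. D i j s t)" if "t \<in> U" for i j t
    using cont_slice[OF Dc[of i j], of t] that by (simp add: S_def U_def)
  have Qne: "cr (D 1 0 (fst p) (snd p)) (D 2 0 (fst p) (snd p)) \<noteq> 0" if "p \<in> S \<times> U" for p
    using Qpos[of "fst p" "snd p"] that by (auto simp: S_def U_def)
  have c1: "continuous_on (S \<times> U) (\<lambda>p. g1F lm (D 0 0 (fst p) (snd p)) (D 1 0 (fst p) (snd p)) (D 2 0 (fst p) (snd p))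
      (D 0 1 (fst p) (snd p)) (D 1 1 (fst p) (snd p)) (D 2 1 (fst p) (snd p)))"
    by (rule cont_g1 cD Qne)+
  have c1': "continuous_on (U \<times> S) (\<lambda>(t,s). g1F lm (D 0 0 s t) (D 1 0 s t) (D 2 0 s t) (D 0 1 s t) (D 1 1 s t) (D 2 1 s t))"
    using swap_cont[of S U "\<lambda>s t. g1F lm (D 0 0 s t) (D 1 0 s t) (D 2 0 s t) (D 0 1 s t) (D 1 1 s t) (D 2 1 s t)"] c1
    by (simp add: split_beta)
  have c2: "continuous_on (S \<times> U) (\<lambda>p. g2F lm (D 0 0 (fst p) (snd p)) (D 1 0 (fst p) (snd p)) (D 2 0 (fst p) (snd p))
      (D 0 1 (fst p) (snd p)) (D 1 1 (fst p) (snd p)) (D 2 1 (fst p) (snd p))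
      (D 0 2 (fst p) (snd p)) (D 1 2 (fst p) (snd p)) (D 2 2 (fst p) (snd p)))"
    by (rule cont_g2 cD Qne)+
  have c2': "continuous_on (U \<times> S) (\<lambda>(t,s). g2F lm (D 0 0 s t) (D 1 0 s t) (D 2 0 s t) (D 0 1 s t) (D 1 1 s t) (D 2 1 s t)
      (D 0 2 s t) (D 1 2 s t) (D 2 2 s t))"
    using swap_cont[of S U "\<lambda>s t. g2F lm (D 0 0 s t) (D 1 0 s t) (D 2 0 s t) (D 0 1 s t) (D 1 1 s t) (D 2 1 s t)
      (D 0 2 s t) (D 1 2 s t) (D 2 2 s t)"] c2
    by (simp add: split_beta)
  have Qne2: "cr (D 1 0 s t) (D 2 0 s t) \<noteq> 0" if "s \<in> S" "t \<in> U" for s t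
    using Qpos[of s t] that by (auto simp: S_def U_def)
  have int0: "(\<lambda>s. g0F lm (D 0 0 s t) (D 1 0 s t) (D 2 0 s t)) integrable_on S" if "t \<in> U" for t
    apply (rule integrable_continuous_interval[of 0 "2*L", unfolded S_def[symmetric]])
    apply (rule cont_g0 cDs[OF that] Qne2[OF _ that])+
    by (simp add: S_def)
  have int1: "(\<lambda>s. g1F lm (D 0 0 s t) (D 1 0 s t) (D 2 0 s t) (D 0 1 s t) (D 1 1 s t) (D 2 1 s t)) integrable_on S"
    if "t \<in> U" for t
    apply (rule integrable_continuous_interval[of 0 "2*L", unfolded S_def[symmetric]])
    apply (rule cont_g1 cDs[OF that] Qne2[OF _ that])+
    by (simp add: S_def)
  have lb1: "((\<lambda>t. integral S (\<lambda>s. g0F lm (D 0 0 s t) (D 1 0 s t) (D 2 0 s t))) has_real_derivative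
     integral S (\<lambda>s. g1F lm (D 0 0 s t) (D 1 0 s t) (D 2 0 s t) (D 0 1 s t) (D 1 1 s t) (D 2 1 s t))) (at t within U)"
    if "t \<in> U" for t
    using leibniz_rule_field_derivative[of U 0 "2*L" "\<lambda>t s. g0F lm (D 0 0 s t) (D 1 0 s t) (D 2 0 s t)"
       "\<lambda>t s. g1F lm (D 0 0 s t) (D 1 0 s t) (D 2 0 s t) (D 0 1 s t) (D 1 1 s t) (D 2 1 s t)" t]
    unfolding cbS
    using g0_deriv[OF Ddt Ddt Ddt] Qne2 int0 c1' that cU
    by (auto simp: S_def U_def)
  have fx2: "((\<lambda>t. g1F lm (D 0 0 s t) (D 1 0 s t) (D 2 0 s t) (D 0 1 s t) (D 1 1 s t) (D 2 1 s t))
     has_real_derivative g2F lm (D 0 0 s t) (D 1 0 s t) (D 2 0 s t) (D 0 1 s t) (D 1 1 s t) (D 2 1 s t)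
      (D 0 2 s t) (D 1 2 s t) (D 2 2 s t)) (at t within U)" if "t \<in> U" "s \<in> S" for t s
  proof -
    have "((\<lambda>t. g1F lm (D 0 0 s t) (D 1 0 s t) (D 2 0 s t) (D 0 1 s t) (D 1 1 s t) (D 2 1 s t))
     has_real_derivative g2F lm (D 0 0 s t) (D 1 0 s t) (D 2 0 s t) (D 0 1 s t) (D 1 1 s t) (D 2 1 s t)
      (D 0 (Suc 1) s t) (D 1 (Suc 1) s t) (D 2 (Suc 1) s t)) (at t within U)"
      apply (rule g1_deriv[where ?a00.0="\<lambda>t. D 0 0 s t" and ?a10.0="\<lambda>t. D 1 0 s t" and ?a20.0="\<lambda>t. D 2 0 s t"
          and ?a01.0="\<lambda>t. D 0 1 s t" and ?a11.0="\<lambda>t. D 1 1 s t" and ?a21.0="\<lambda>t. D 2 1 s t"])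
      using Ddt that Qne2 by (auto simp: S_def U_def)
    then show ?thesis by (simp add: numeral_2_eq_2)
  qed
  have lb2: "((\<lambda>t. integral S (\<lambda>s. g1F lm (D 0 0 s t) (D 1 0 s t) (D 2 0 s t) (D 0 1 s t) (D 1 1 s t) (D 2 1 s t)))
     has_real_derivative integral S (\<lambda>s. g2F lm (D 0 0 s 0) (D 1 0 s 0) (D 2 0 s 0)
              (D 0 1 s 0) (D 1 1 s 0) (D 2 1 s 0) (D 0 2 s 0) (D 1 2 s 0) (D 2 2 s 0))) (at 0 within U)"
    using leibniz_rule_field_derivative[of U 0 "2*L" "\<lambda>t s. g1F lm (D 0 0 s t) (D 1 0 s t) (D 2 0 s t) (D 0 1 s t) (D 1 1 s t) (D 2 1 s t)"
       "\<lambda>t s. g2F lm (D 0 0 s t) (D 1 0 s t) (D 2 0 s t) (D 0 1 s t) (D 1 1 s t) (D 2 1 s t)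
      (D 0 2 s t) (D 1 2 s t) (D 2 2 s t)" 0]
    unfolding cbS
    using fx2 int1 c2' cU T
    by (auto simp: S_def U_def)
  have Gint: "Fenergy L (\<lambda>s. V s t) - lm * area L (\<lambda>s. V s t) =
      integral S (\<lambda>s. g0F lm (D 0 0 s t) (D 1 0 s t) (D 2 0 s t))" if t: "t \<in> U" for t
  proof -
    have L2: "0 < 2*L" using L by simp
    have ds1: "Ds L (\<lambda>s. V s t) s = D 1 0 s t" if "s \<in> S" for s
      unfolding Ds_def D0[symmetric]
      by (rule vector_derivative_within_closed_interval[OF L2]) (use that t Dds in \<open>auto simp: S_def U_def\<close>)
    have ds2: "Ds L (Ds L (\<lambda>s. V s t)) s = D 2 0 s t" if "s \<in> S" for s
    proof -
      have "(Ds L (\<lambda>s. V s t) has_vector_derivative D 2 0 s t) (at s within {0..2*L})"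
        apply (rule has_vector_derivative_transform[where f="\<lambda>s. D 1 0 s t"])
        using that ds1 apply (auto simp: S_def)[2]
        using Dds[of s t 1 0] that t by (auto simp: S_def U_def numeral_2_eq_2)
      from vector_derivative_within_closed_interval[OF L2 _ this] that show ?thesis
        unfolding Ds_def[of L "Ds L (\<lambda>s. V s t)"] by (auto simp: S_def)
    qed
    have F: "Fenergy L (\<lambda>s. V s t) = integral S (\<lambda>s. (inner (D 1 0 s t) (D 1 0 s t))^2 / cr (D 1 0 s t) (D 2 0 s t))"
      unfolding Fenergy_def curvature_def S_def[symmetric]
      apply (rule integral_cong)
      using ds1 ds2 normcurv Qne2 t by auto
    have A: "area L (\<lambda>s. V s t) = 1/2 * integral S (\<lambda>s. cr (D 0 0 s t) (D 1 0 s t))"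
      unfolding area_def S_def[symmetric]
      apply (rule arg_cong[where f="\<lambda>x. 1/2 * x"])
      apply (rule integral_cong)
      using ds1 D0 by (auto simp: cr_def)
    have iF: "(\<lambda>s. (inner (D 1 0 s t) (D 1 0 s t))^2 / cr (D 1 0 s t) (D 2 0 s t)) integrable_on S"
      apply (rule integrable_continuous_interval[of 0 "2*L", unfolded S_def[symmetric]])
      using cDs[OF t] Qne2[OF _ t] unfolding cr_def inner_pair_eq
      by (auto simp: S_def intro!: continuous_intros)
    have iA: "(\<lambda>s. cr (D 0 0 s t) (D 1 0 s t)) integrable_on S"
      apply (rule integrable_continuous_interval[of 0 "2*L", unfolded S_def[symmetric]])
      using cDs[OF t] unfolding cr_def
      by (auto simp: S_def intro!: continuous_intros)
    show ?thesis
      unfolding F A g0F_def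
      using integral_diff[OF iF integrable_on_cmult_left[OF iA, of "lm/2"]]
      by (simp add: integral_mult_left)
  qed
  show "\<forall>t\<in>{-T<..<T}. ((\<lambda>t. Fenergy L (\<lambda>s. V s t) - lm * area L (\<lambda>s. V s t)) has_real_derivative
            integral {0..2*L} (\<lambda>s. g1F lm (D 0 0 s t) (D 1 0 s t) (D 2 0 s t) (D 0 1 s t) (D 1 1 s t) (D 2 1 s t))) (at t)"
  proof
    fix t assume t: "t \<in> {-T<..<T}"
    then have tU: "t \<in> U" by (auto simp: U_def)
    have X: "((\<lambda>t. integral S (\<lambda>s. g0F lm (D 0 0 s t) (D 1 0 s t) (D 2 0 s t))) has_real_derivative
     integral S (\<lambda>s. g1F lm (D 0 0 s t) (D 1 0 s t) (D 2 0 s t) (D 0 1 s t) (D 1 1 s t) (D 2 1 s t))) (at t)"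
      using lb1[OF tU] interior_ivl[OF t] by (simp add: U_def)
    show "((\<lambda>t. Fenergy L (\<lambda>s. V s t) - lm * area L (\<lambda>s. V s t)) has_real_derivative
            integral {0..2*L} (\<lambda>s. g1F lm (D 0 0 s t) (D 1 0 s t) (D 2 0 s t) (D 0 1 s t) (D 1 1 s t) (D 2 1 s t))) (at t)"
      apply (rule has_field_derivative_transform_within_open[OF X[unfolded S_def], where S="{-T<..<T}"])
      using t Gint by (auto simp: S_def U_def)
  qed
  show "((\<lambda>t. integral {0..2*L} (\<lambda>s. g1F lm (D 0 0 s t) (D 1 0 s t) (D 2 0 s t) (D 0 1 s t) (D 1 1 s t) (D 2 1 s t)))
           has_real_derivative integral {0..2*L} (\<lambda>s. g2F lm (D 0 0 s 0) (D 1 0 s 0) (D 2 0 s 0)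
              (D 0 1 s 0) (D 1 1 s 0) (D 2 1 s 0) (D 0 2 s 0) (D 1 2 s 0) (D 2 2 s 0))) (at 0)"
    using lb2 interior_ivl[of 0 T] T by (simp add: U_def S_def)
qed

lemma frame_deriv:
  fixes a :: "real \<Rightarrow> real \<times> real"
  assumes B: "0 < 3 * x0" "3 * x0 < L" and r: "\<bar>s - L\<bar> < gamma_k x0 L"
    and d: "(a has_vector_derivative b) (at s within S)"
  shows "((\<lambda>s. inner (a s) (NF x0 L s)) has_real_derivative
           inner b (NF x0 L s) + HF x0 L s * inner (a s) (TF x0 L s)) (at s within S)"
    and "((\<lambda>s. inner (a s) (TF x0 L s)) has_real_derivative
           inner b (TF x0 L s) - HF x0 L s * inner (a s) (NF x0 L s)) (at s within S)"
proof -
  show "((\<lambda>s. inner (a s) (NF x0 L s)) has_real_derivative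
           inner b (NF x0 L s) + HF x0 L s * inner (a s) (TF x0 L s)) (at s within S)"
    using vd_inner[OF d has_vector_derivative_at_within[OF dNF[OF B r]]] by simp
  show "((\<lambda>s. inner (a s) (TF x0 L s)) has_real_derivative
           inner b (TF x0 L s) - HF x0 L s * inner (a s) (NF x0 L s)) (at s within S)"
    using vd_inner[OF d has_vector_derivative_at_within[OF dTF[OF B r]]] by simp
qed

lemma norm_TF: "norm (TF x0 L s) = 1"
  by (simp add: TF_def norm_Pair)

lemma inner_NF_NF: "inner (NF x0 L s) (NF x0 L s) = 1"
  by (simp add: NF_def inner_pair_eq power2_eq_square[symmetric])

lemma inner_TF_NF: "inner (TF x0 L s) (NF x0 L s) = 0"
  by (simp add: NF_def TF_def inner_pair_eq)

lemma inner_TF_TF: "inner (TF x0 L s) (TF x0 L s) = 1"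
  by (simp add: TF_def inner_pair_eq power2_eq_square[symmetric])

theorem mainTheorem12:
  fixes x0 L T :: real
    and V :: "real \<Rightarrow> real \<Rightarrow> real \<times> real"
    and \<phi> \<phi>\<tau> \<psi> \<psi>\<tau> :: "real \<Rightarrow> real"
  assumes "0 < 3 * x0" and "3 * x0 < L"
    and "T > 0"
    and "smooth_on_rect {0..2*L} {-T..T} V"
    and "\<forall>s\<in>{0..2*L}. V s 0 = gamma_curve x0 L s"
    and "\<forall>t\<in>{-T..T}. admissible x0 L (\<lambda>s. V s t)"
    and "\<forall>s\<in>{0..2*L}. vector_derivative (\<lambda>t. V s t) (at 0 within {-T..T})
           = \<phi> s *\<^sub>R normal L (gamma_curve x0 L) s
             + \<phi>\<tau> s *\<^sub>R Ds L (gamma_curve x0 L) s"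
    and "\<forall>s\<in>{0..2*L}.
           vector_derivative (\<lambda>t. vector_derivative (\<lambda>t. V s t) (at t within {-T..T}))
             (at 0 within {-T..T})
           = \<psi> s *\<^sub>R normal L (gamma_curve x0 L) s
             + \<psi>\<tau> s *\<^sub>R Ds L (gamma_curve x0 L) s"
  shows "let \<gamma> = gamma_curve x0 L; lm = lam x0 L; H = curvature L \<gamma>;
             G = (\<lambda>t. Fenergy L (\<lambda>s. V s t) - lm * area L (\<lambda>s. V s t));
             I = integral {0..2*L} (\<lambda>s. (2 - lm) * H s * (\<phi> s)\<^sup>2
                    - 2 * (Ds L \<phi> s)\<^sup>2 / H s + 2 * (Ds L (Ds L \<phi>) s)\<^sup>2 / (H s)^3);
             B = Ds L \<psi> (2*L) / (H (2*L))\<^sup>2 - Ds L \<psi> 0 / (H 0)\<^sup>2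
         in (\<exists>G'. (\<forall>t\<in>{-T<..<T}. (G has_real_derivative G' t) (at t)) \<and>
                  (G' has_real_derivative (I + B)) (at 0))
            \<and> I + B \<ge> I"

proof -
  have B: "0 < 3 * x0" "3 * x0 < L" using assms(1,2) by auto
  have Lp: "0 < L" using assms(1,2) by linarith
  have L2: "0 < 2*L" using Lp by simp
  have Tp: "0 < T" by (rule assms(3))
  have T0: "0 \<in> {-T..T}" using Tp by simp
  have TT: "-T < T" using Tp by simp
  obtain D where D0: "D 0 0 = V" and Dall: "\<forall>i j. continuous_on ({0..2*L} \<times> {-T..T}) (\<lambda>(s,t). D i j s t) \<and>
        (\<forall>s\<in>{0..2*L}. \<forall>t\<in>{-T..T}.
           ((\<lambda>s. D i j s t) has_vector_derivative D (Suc i) j s t) (at s within {0..2*L}) \<and>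
           ((\<lambda>t. D i j s t) has_vector_derivative D i (Suc j) s t) (at t within {-T..T}))"
    using assms(4) unfolding smooth_on_rect_def by blast
  have Dc: "\<And>i j. continuous_on ({0..2*L} \<times> {-T..T}) (\<lambda>(s,t). D i j s t)" using Dall by blast
  have Dds: "\<And>i j s t. s \<in> {0..2*L} \<Longrightarrow> t \<in> {-T..T} \<Longrightarrow>
       ((\<lambda>s. D i j s t) has_vector_derivative D (Suc i) j s t) (at s within {0..2*L})" using Dall by blast
  have Ddt: "\<And>i j s t. s \<in> {0..2*L} \<Longrightarrow> t \<in> {-T..T} \<Longrightarrow>
       ((\<lambda>t. D i j s t) has_vector_derivative D i (Suc j) s t) (at t within {-T..T})" using Dall by blast
  have adm: "admissible x0 L (\<lambda>s. D 0 0 s t)" if "t \<in> {-T..T}" for t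
    using assms(6) D0 that by simp
  have ds1: "Ds L (\<lambda>s. D 0 0 s t) s = D 1 0 s t" if "s \<in> {0..2*L}" "t \<in> {-T..T}" for s t
    unfolding Ds_def
    by (rule vector_derivative_within_closed_interval[OF L2]) (use that Dds in auto)
  have ds2: "Ds L (Ds L (\<lambda>s. D 0 0 s t)) s = D 2 0 s t" if "s \<in> {0..2*L}" "t \<in> {-T..T}" for s t
  proof -
    have "(Ds L (\<lambda>s. D 0 0 s t) has_vector_derivative D 2 0 s t) (at s within {0..2*L})"
      apply (rule has_vector_derivative_transform[where f="\<lambda>s. D 1 0 s t"])
      using that ds1 apply auto[2]
      using Dds[of s t 1 0] that by (auto simp: numeral_2_eq_2)
    from vector_derivative_within_closed_interval[OF L2 _ this] that show ?thesis
      unfolding Ds_def[of L "Ds L (\<lambda>s. D 0 0 s t)"] by auto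
  qed
  have Qpos: "0 < cr (D 1 0 s t) (D 2 0 s t)" if "s \<in> {0..2*L}" "t \<in> {-T..T}" for s t
  proof -
    have "0 < curvature L (\<lambda>s. D 0 0 s t) s" using adm[OF that(2)] that(1) unfolding admissible_def by blast
    then have "0 < cr (D 1 0 s t) (D 2 0 s t) / norm (D 1 0 s t) ^ 3"
      unfolding curvature_def ds1[OF that] ds2[OF that] inner_perp .
    moreover have "0 \<le> norm (D 1 0 s t) ^ 3" by simp
    ultimately show ?thesis by (simp add: zero_less_divide_iff)
  qed
  define lm where "lm = lam x0 L"
  note GD = G_derivs[OF Tp Lp D0 Dc Ddt Dds Qpos, of lm]

  define S where "S = {0..2*L}"
  have inr: "\<bar>s - L\<bar> < gamma_k x0 L" if "s \<in> S" for s using in_range[OF B] that by (simp add: S_def)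
  have gam0: "D 0 0 s 0 = gamma_curve x0 L s" if "s \<in> S" for s using assms(5) D0 that by (simp add: S_def)
  have gamD: "(gamma_curve x0 L has_vector_derivative TF x0 L s) (at s within S)" if "s \<in> S" for s
    using gamma_deriv[OF B inr[OF that]] by (rule has_vector_derivative_at_within)
  have D10g: "D 1 0 s 0 = TF x0 L s" if "s \<in> S" for s
  proof -
    have "((\<lambda>s. D 0 0 s 0) has_vector_derivative TF x0 L s) (at s within S)"
      apply (rule has_vector_derivative_transform[OF that _ gamD[OF that]])
      using gam0 by simp
    then show ?thesis
      using deriv_unique_ivl[OF L2 _ Dds[of s 0 0 0]] that T0 by (auto simp: S_def)
  qed
  have D20g: "D 2 0 s 0 = (- HF x0 L s) *\<^sub>R NF x0 L s" if "s \<in> S" for s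
  proof -
    have "((\<lambda>s. D 1 0 s 0) has_vector_derivative (- HF x0 L s) *\<^sub>R NF x0 L s) (at s within S)"
      apply (rule has_vector_derivative_transform[OF that _ has_vector_derivative_at_within[OF dTF[OF B inr[OF that]]]])
      using D10g by simp
    then show ?thesis
      using deriv_unique_ivl[OF L2 _ Dds[of s 0 1 0]] that T0 by (auto simp: S_def numeral_2_eq_2)
  qed
  have DsG: "Ds L (gamma_curve x0 L) s = TF x0 L s" if "s \<in> S" for s
    unfolding Ds_def
    using vector_derivative_within_closed_interval[OF L2 _ gamD[OF that, unfolded S_def]] that
    by (simp add: S_def)
  have DsDsG: "Ds L (Ds L (gamma_curve x0 L)) s = (- HF x0 L s) *\<^sub>R NF x0 L s" if "s \<in> S" for s
  proof -
    have "(Ds L (gamma_curve x0 L) has_vector_derivative (- HF x0 L s) *\<^sub>R NF x0 L s) (at s within S)"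
      apply (rule has_vector_derivative_transform[OF that _ has_vector_derivative_at_within[OF dTF[OF B inr[OF that]]]])
      using DsG by simp
    from vector_derivative_within_closed_interval[OF L2 _ this[unfolded S_def]] that show ?thesis
      unfolding Ds_def[of L "Ds L (gamma_curve x0 L)"] by (simp add: S_def)
  qed
  have curvG: "curvature L (gamma_curve x0 L) s = HF x0 L s" if "s \<in> S" for s
  proof -
    have "cr (TF x0 L s) ((- HF x0 L s) *\<^sub>R NF x0 L s) = HF x0 L s"
    proof -
      have "cr a (c *\<^sub>R b) = c * cr a b" for a b :: "real \<times> real" and c
        by (simp add: cr_def algebra_simps)
      then show ?thesis using cr_TF_NF[of x0 L s] by (simp del: scaleR_minus_left)
    qed
    then show ?thesis
      unfolding curvature_def DsG[OF that] DsDsG[OF that] inner_perp norm_TF by simp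
  qed
  have normalG: "normal L (gamma_curve x0 L) s = NF x0 L s" if "s \<in> S" for s
    unfolding normal_def DsG[OF that] norm_TF perp_TF by simp
  have vd1: "vector_derivative (\<lambda>t. V s t) (at 0 within {-T..T}) = D 0 1 s 0" if "s \<in> S" for s
    unfolding D0[symmetric]
    by (rule vector_derivative_within_closed_interval[OF TT T0]) (use Ddt that T0 in \<open>auto simp: S_def\<close>)
  have vdt: "vector_derivative (\<lambda>t. V s t) (at t within {-T..T}) = D 0 1 s t" if "s \<in> S" "t \<in> {-T..T}" for s t
    unfolding D0[symmetric]
    by (rule vector_derivative_within_closed_interval[OF TT that(2)]) (use Ddt that in \<open>auto simp: S_def\<close>)
  have vd2: "vector_derivative (\<lambda>t. vector_derivative (\<lambda>t. V s t) (at t within {-T..T})) (at 0 within {-T..T})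
       = D 0 2 s 0" if "s \<in> S" for s
  proof -
    have dd: "((\<lambda>t. D 0 1 s t) has_vector_derivative D 0 2 s 0) (at 0 within {-T..T})"
      using Ddt[of s 0 0 1] that T0 by (simp add: S_def numeral_2_eq_2)
    have "((\<lambda>t. vector_derivative (\<lambda>t. V s t) (at t within {-T..T})) has_vector_derivative D 0 2 s 0) (at 0 within {-T..T})"
      apply (rule has_vector_derivative_transform[OF T0 _ dd])
      using vdt that T0 by (auto simp: S_def)
    then show ?thesis by (rule vector_derivative_within_closed_interval[OF TT T0])
  qed
  have phi: "\<phi> s = inner (D 0 1 s 0) (NF x0 L s)" if "s \<in> S" for s
  proof -
    have "D 0 1 s 0 = \<phi> s *\<^sub>R NF x0 L s + \<phi>\<tau> s *\<^sub>R TF x0 L s"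
      using assms(7) that vd1[OF that] normalG[OF that] DsG[OF that] by (auto simp: S_def)
    then show ?thesis by (simp add: inner_add_left inner_NF_NF inner_commute[of "TF x0 L s"] inner_TF_NF)
  qed
  have psi: "\<psi> s = inner (D 0 2 s 0) (NF x0 L s)" if "s \<in> S" for s
  proof -
    have "D 0 2 s 0 = \<psi> s *\<^sub>R NF x0 L s + \<psi>\<tau> s *\<^sub>R TF x0 L s"
      using assms(8) that vd2[OF that] normalG[OF that] DsG[OF that] by (auto simp: S_def)
    then show ?thesis by (simp add: inner_add_left inner_NF_NF inner_commute[of "TF x0 L s"] inner_TF_NF)
  qed

  define xf where "xf j s = inner (D j 1 s 0) (NF x0 L s)" for j s
  define yf where "yf j s = inner (D j 1 s 0) (TF x0 L s)" for j s
  define uf where "uf j s = inner (D j 2 s 0) (NF x0 L s)" for j s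
  define wf where "wf j s = inner (D j 2 s 0) (TF x0 L s)" for j s
  define Cg where "Cg s = cr (D 0 0 s 0) (D 0 2 s 0)" for s
  define Cc where "Cc s = cr (D 0 0 s 0) (D 1 2 s 0)" for s
  have dD1: "((\<lambda>s. D j 1 s 0) has_vector_derivative D (Suc j) 1 s 0) (at s within S)" if "s \<in> S" for j s
    using Dds[of s 0 j 1] that T0 by (simp add: S_def)
  have dD2: "((\<lambda>s. D j 2 s 0) has_vector_derivative D (Suc j) 2 s 0) (at s within S)" if "s \<in> S" for j s
    using Dds[of s 0 j 2] that T0 by (simp add: S_def)
  have dxf: "(xf j has_real_derivative xf (Suc j) s + HF x0 L s * yf j s) (at s within S)" if "s \<in> S" for j s
    unfolding xf_def[abs_def] yf_def by (rule frame_deriv(1)[OF B inr[OF that] dD1[OF that]])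
  have dyf: "(yf j has_real_derivative yf (Suc j) s - HF x0 L s * xf j s) (at s within S)" if "s \<in> S" for j s
    unfolding yf_def[abs_def] xf_def by (rule frame_deriv(2)[OF B inr[OF that] dD1[OF that]])
  have duf: "(uf j has_real_derivative uf (Suc j) s + HF x0 L s * wf j s) (at s within S)" if "s \<in> S" for j s
    unfolding uf_def[abs_def] wf_def by (rule frame_deriv(1)[OF B inr[OF that] dD2[OF that]])
  have dwf: "(wf j has_real_derivative wf (Suc j) s - HF x0 L s * uf j s) (at s within S)" if "s \<in> S" for j s
    unfolding wf_def[abs_def] uf_def by (rule frame_deriv(2)[OF B inr[OF that] dD2[OF that]])
  have dCg: "(Cg has_real_derivative (Cc s - uf 0 s)) (at s within S)" if "s \<in> S" for s
  proof -
    have "(Cg has_real_derivative cr (D 1 0 s 0) (D 0 2 s 0) + cr (D 0 0 s 0) (D 1 2 s 0)) (at s within S)"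
      unfolding Cg_def[abs_def]
      apply (rule vd_cr)
      using Dds[of s 0 0 0] that T0 apply (simp add: S_def)
      using dD2[OF that, of 0] by simp
    moreover have "cr (D 1 0 s 0) (D 0 2 s 0) = - uf 0 s"
      unfolding D10g[OF that] uf_def by (simp add: cr_def TF_def NF_def inner_pair_eq algebra_simps)
    ultimately show ?thesis by (simp add: Cc_def)
  qed
  have dHs: "(HF x0 L has_real_derivative H1F x0 L s) (at s within S)" if "s \<in> S" for s
    using dHF[OF B inr[OF that]] by (rule has_field_derivative_at_within)
  have dH1s: "(H1F x0 L has_real_derivative H2F x0 L s) (at s within S)" if "s \<in> S" for s
    using dH1F[OF B inr[OF that]] by (rule has_field_derivative_at_within)
  have ELs: "H2F x0 L s = 3 * (H1F x0 L s)^2 / HF x0 L s + (2 - lm) * (HF x0 L s)^3 / 2" if "s \<in> S" for s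
    unfolding lm_def by (rule EL[OF B inr[OF that]])
  have Hp: "0 < HF x0 L s" if "s \<in> S" for s by (rule HF_pos[OF B inr[OF that]])
  define Rf where "Rf s = RF (HF x0 L s) (H1F x0 L s) lm (xf 0 s) (xf 1 s) (yf 0 s) (yf 1 s) (uf 0 s) (uf 1 s) (wf 0 s) (Cg s)" for s
  define Phi where "Phi s = PhiF (HF x0 L s) lm (xf 0 s) (yf 0 s) (xf 1 s) (yf 1 s) (xf 2 s) (yf 2 s) (uf 0 s) (uf 2 s) (wf 1 s) (Cc s)" for s
  define Iint where "Iint s = IintF (HF x0 L s) (H1F x0 L s) lm (xf 0 s) (xf 1 s) (xf 2 s) (yf 0 s) (yf 1 s)" for s
  have dRf: "(Rf has_real_derivative Phi s - Iint s) (at s within S)" if "s \<in> S" for s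
    unfolding Rf_def[abs_def] Phi_def Iint_def
    apply (rule core_deriv[where ?H2.0="H2F x0 L s"])
    using dHs[OF that] dH1s[OF that] dxf[OF that, of 0] dyf[OF that, of 0] dxf[OF that, of 1] dyf[OF that, of 1]
      duf[OF that, of 0] dwf[OF that, of 0] duf[OF that, of 1] dCg[OF that] Hp[OF that] ELs[OF that]
    by (simp_all add: numeral_2_eq_2)
  have g2eq: "g2F lm (D 0 0 s 0) (D 1 0 s 0) (D 2 0 s 0) (D 0 1 s 0) (D 1 1 s 0) (D 2 1 s 0)
      (D 0 2 s 0) (D 1 2 s 0) (D 2 2 s 0) = Phi s" if "s \<in> S" for s
    unfolding D10g[OF that] D20g[OF that] Phi_def xf_def yf_def uf_def wf_def Cc_def
    using g2_frame[OF TF_unit Hp[OF that], of lm "D 0 0 s 0" x0 L s] by (simp add: perp_TF)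

  have ftc: "((\<lambda>s. Phi s - Iint s) has_integral (Rf (2*L) - Rf 0)) S"
    unfolding S_def
    apply (rule fundamental_theorem_of_calculus)
    using L2 apply simp
    using dRf unfolding S_def has_real_derivative_iff_has_vector_derivative by auto
  define J where "J = integral S (\<lambda>s. g2F lm (D 0 0 s 0) (D 1 0 s 0) (D 2 0 s 0) (D 0 1 s 0) (D 1 1 s 0) (D 2 1 s 0)
      (D 0 2 s 0) (D 1 2 s 0) (D 2 2 s 0))"
  have cDs: "continuous_on S (\<lambda>s. D i j s 0)" for i j
    using cont_slice[OF Dc[of i j] T0] by (simp add: S_def)
  have Qne: "cr (D 1 0 s 0) (D 2 0 s 0) \<noteq> 0" if "s \<in> S" for s
    using Qpos[of s 0] that T0 by (auto simp: S_def)
  have cg2: "continuous_on S (\<lambda>s. g2F lm (D 0 0 s 0) (D 1 0 s 0) (D 2 0 s 0) (D 0 1 s 0) (D 1 1 s 0) (D 2 1 s 0)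
      (D 0 2 s 0) (D 1 2 s 0) (D 2 2 s 0))"
    by (rule cont_g2 cDs Qne)+
  have hJ: "(Phi has_integral J) S"
    unfolding J_def
    apply (rule has_integral_eq[OF g2eq])
     apply assumption
    apply (rule integrable_integral)
    using integrable_continuous_interval[OF cg2[unfolded S_def]] by (simp add: S_def)
  have hI: "(Iint has_integral J - (Rf (2*L) - Rf 0)) S"
    using has_integral_eq[OF _ has_integral_diff[OF hJ ftc], of Iint] by simp
  have xf0: "\<phi> s = xf 0 s" if "s \<in> S" for s using phi[OF that] by (simp add: xf_def)
  have dphiS: "(\<phi> has_real_derivative xf 1 s + HF x0 L s * yf 0 s) (at s within S)" if "s \<in> S" for s
    unfolding has_real_derivative_iff_has_vector_derivative
    apply (rule has_vector_derivative_transform[OF that xf0])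
     apply assumption
    using dxf[OF that, of 0] unfolding has_real_derivative_iff_has_vector_derivative by simp
  have Dphi: "Ds L \<phi> s = xf 1 s + HF x0 L s * yf 0 s" if "s \<in> S" for s
    unfolding Ds_def
    apply (rule vector_derivative_within_closed_interval[OF L2])
    using that apply (simp add: S_def)
    using dphiS[OF that] unfolding has_real_derivative_iff_has_vector_derivative S_def .
  have DDphi: "Ds L (Ds L \<phi>) s = xf 2 s + 2 * HF x0 L s * yf 1 s + H1F x0 L s * yf 0 s - (HF x0 L s)^2 * xf 0 s"
    if "s \<in> S" for s
  proof -
    have "((\<lambda>s. xf 1 s + HF x0 L s * yf 0 s) has_real_derivative
        (xf 2 s + HF x0 L s * yf 1 s) + (H1F x0 L s * yf 0 s + HF x0 L s * (yf 1 s - HF x0 L s * xf 0 s))) (at s within S)"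
      apply (rule DERIV_add)
      using dxf[OF that, of 1] apply (simp add: numeral_2_eq_2)
      apply (rule DERIV_cong[OF DERIV_mult[OF dHs[OF that] dyf[OF that, of 0]]])
      by simp
    then have "(Ds L \<phi> has_vector_derivative
        (xf 2 s + HF x0 L s * yf 1 s) + (H1F x0 L s * yf 0 s + HF x0 L s * (yf 1 s - HF x0 L s * xf 0 s))) (at s within S)"
      unfolding has_real_derivative_iff_has_vector_derivative
      by (rule has_vector_derivative_transform[OF that Dphi, rotated])
    from vector_derivative_within_closed_interval[OF L2 _ this[unfolded S_def]] that
    show ?thesis unfolding Ds_def[of L "Ds L \<phi>"] by (simp add: S_def algebra_simps power2_eq_square)
  qed
  have dpsiS: "(\<psi> has_real_derivative uf 1 s + HF x0 L s * wf 0 s) (at s within S)" if "s \<in> S" for s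
    unfolding has_real_derivative_iff_has_vector_derivative
    apply (rule has_vector_derivative_transform[where f="uf 0", OF that])
     apply (simp add: psi uf_def)
    using duf[OF that, of 0] unfolding has_real_derivative_iff_has_vector_derivative by simp
  have Dpsi: "Ds L \<psi> s = uf 1 s + HF x0 L s * wf 0 s" if "s \<in> S" for s
    unfolding Ds_def
    apply (rule vector_derivative_within_closed_interval[OF L2])
    using that apply (simp add: S_def)
    using dpsiS[OF that] unfolding has_real_derivative_iff_has_vector_derivative S_def .
  have Ieq: "integral {0..2*L} (\<lambda>s. (2 - lm) * curvature L (gamma_curve x0 L) s * (\<phi> s)\<^sup>2
        - 2 * (Ds L \<phi> s)\<^sup>2 / curvature L (gamma_curve x0 L) s
        + 2 * (Ds L (Ds L \<phi>) s)\<^sup>2 / (curvature L (gamma_curve x0 L) s)^3) = J - (Rf (2*L) - Rf 0)"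
    unfolding S_def[symmetric]
    apply (rule integral_unique)
    apply (rule has_integral_eq[OF _ hI])
    unfolding Iint_def IintF_def
    by (simp add: curvG xf0 Dphi DDphi)

  have e0: "0 \<in> S" and e2: "2*L \<in> S" using L2 by (auto simp: S_def)
  have Vend: "D 0 0 0 t = (x0, 0) \<and> D 0 0 (2*L) t = (- x0, 0)" if "t \<in> {-T..T}" for t
    using adm[OF that] unfolding admissible_def by simp
  have D01z: "D 0 1 e t = 0" if "e \<in> S" "t \<in> {-T..T}" "\<And>t. t \<in> {-T..T} \<Longrightarrow> D 0 0 e t = c" for e t c
  proof -
    have "((\<lambda>t. D 0 0 e t) has_vector_derivative 0) (at t within {-T..T})"
      apply (rule has_vector_derivative_transform[where f="\<lambda>t. c", OF that(2)])
      using that(3) apply simp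
      by (rule has_vector_derivative_const)
    then show ?thesis using deriv_unique_ivl[OF TT that(2) Ddt[of e t 0 0]] that by (simp add: S_def)
  qed
  have D02z: "D 0 2 e 0 = 0" if "e \<in> S" "\<And>t. t \<in> {-T..T} \<Longrightarrow> D 0 0 e t = c" for e c
  proof -
    have "((\<lambda>t. D 0 1 e t) has_vector_derivative 0) (at 0 within {-T..T})"
      apply (rule has_vector_derivative_transform[where f="\<lambda>t. 0", OF T0])
      using D01z[OF that(1) _ that(2)] apply simp
      by (rule has_vector_derivative_const)
    then show ?thesis using deriv_unique_ivl[OF TT T0 Ddt[of e 0 0 1]] that T0 by (simp add: S_def numeral_2_eq_2)
  qed
  have z0: "D 0 1 0 0 = 0" "D 0 2 0 0 = 0"
    using D01z[OF e0 T0, of "(x0,0)"] D02z[OF e0, of "(x0,0)"] Vend by auto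
  have z2: "D 0 1 (2*L) 0 = 0" "D 0 2 (2*L) 0 = 0"
    using D01z[OF e2 T0, of "(-x0,0)"] D02z[OF e2, of "(-x0,0)"] Vend by auto
  have ypos: "0 < snd (D 0 0 s t)" if "s \<in> {0<..<2*L}" "t \<in> {-T..T}" for s t
    using adm[OF that(2)] that(1) unfolding admissible_def by blast
  have f0: "snd (D 1 0 0 0) = 0" "snd (D 1 0 (2*L) 0) = 0"
    using D10g[OF e0] D10g[OF e2] TF_ends[OF B] by simp_all
  have left: "0 \<le> snd (D 1 0 0 t)" if "t \<in> {-T..T}" for t
    apply (rule deriv_left_end[OF L2 _ _ ypos[OF _ that]])
    using vd_snd[OF Dds[of 0 t 0 0]] that L2 apply simp
    using Vend[OF that] by simp_all
  have right: "snd (D 1 0 (2*L) t) \<le> 0" if "t \<in> {-T..T}" for t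
    apply (rule deriv_right_end[OF L2 _ _ ypos[OF _ that]])
    using vd_snd[OF Dds[of "2*L" t 0 0]] that L2 apply simp
    using Vend[OF that] by simp_all
  have m0: "snd (D 1 1 0 0) = 0 \<and> 0 \<le> snd (D 1 2 0 0)"
    apply (rule min2[OF Tp, of "\<lambda>t. snd (D 1 0 0 t)" "\<lambda>t. snd (D 1 1 0 t)"])
    using left f0 apply simp
    using vd_snd[OF Ddt[of 0 _ 1 0]] L2 apply simp
    using vd_snd[OF Ddt[of 0 0 1 1]] L2 T0 by (simp add: numeral_2_eq_2)
  have m2: "- snd (D 1 1 (2*L) 0) = 0 \<and> 0 \<le> - snd (D 1 2 (2*L) 0)"
    apply (rule min2[OF Tp, of "\<lambda>t. - snd (D 1 0 (2*L) t)" "\<lambda>t. - snd (D 1 1 (2*L) t)"])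
    using right f0 apply simp
    using DERIV_minus[OF vd_snd[OF Ddt[of "2*L" _ 1 0]]] L2 apply simp
    using DERIV_minus[OF vd_snd[OF Ddt[of "2*L" 0 1 1]]] L2 T0 by (simp add: numeral_2_eq_2)
  have NFe: "NF x0 L 0 = (0, -1)" "NF x0 L (2*L) = (0, -1)" using TF_ends[OF B] by simp_all
  have v0: "xf 0 0 = 0" "yf 0 0 = 0" "uf 0 0 = 0" "wf 0 0 = 0" "xf 1 0 = 0" "Cg 0 = 0"
    unfolding xf_def yf_def uf_def wf_def Cg_def using z0 m0 NFe by (simp_all add: inner_pair_eq cr_def)
  have Rf0: "Rf 0 = uf 1 0 / (HF x0 L 0)^2"
    unfolding Rf_def RF_def v0 by simp
  have v2: "xf 0 (2*L) = 0" "yf 0 (2*L) = 0" "uf 0 (2*L) = 0" "wf 0 (2*L) = 0" "xf 1 (2*L) = 0" "Cg (2*L) = 0"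
    unfolding xf_def yf_def uf_def wf_def Cg_def using z2 m2 NFe by (simp_all add: inner_pair_eq cr_def)
  have Rf2: "Rf (2*L) = uf 1 (2*L) / (HF x0 L (2*L))^2"
    unfolding Rf_def RF_def v2 by simp
  have u0: "uf 1 0 \<le> 0" and u2: "0 \<le> uf 1 (2*L)"
    unfolding uf_def using m0 m2 NFe by (simp_all add: inner_pair_eq)
  have wz: "wf 0 0 = 0" "wf 0 (2*L) = 0" unfolding wf_def using z0 z2 by simp_all
  have Beq: "Ds L \<psi> (2*L) / (curvature L (gamma_curve x0 L) (2*L))\<^sup>2
      - Ds L \<psi> 0 / (curvature L (gamma_curve x0 L) 0)\<^sup>2 = Rf (2*L) - Rf 0"
    unfolding Rf0 Rf2 using Dpsi[OF e0] Dpsi[OF e2] curvG[OF e0] curvG[OF e2] wz by simp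
  have Bnn: "0 \<le> Rf (2*L) - Rf 0"
  proof -
    have "0 \<le> uf 1 (2*L) / (HF x0 L (2*L))^2" using u2 by simp
    moreover have "uf 1 0 / (HF x0 L 0)^2 \<le> 0" using u0 by (simp add: divide_nonpos_nonneg)
    ultimately show ?thesis unfolding Rf0 Rf2 by linarith
  qed
  show ?thesis
    unfolding Let_def lm_def[symmetric] Ieq Beq
    apply (intro conjI exI[where x="\<lambda>t. integral {0..2*L} (\<lambda>s. g1F lm (D 0 0 s t) (D 1 0 s t) (D 2 0 s t) (D 0 1 s t) (D 1 1 s t) (D 2 1 s t))"])
    using GD(1) apply (simp add: D0)
    using GD(2) apply (simp add: J_def S_def)
    using Bnn by simp
qed

end
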